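(* Let $R \neq \epsilon$ be a homogeneous regular expression. Then there exist $\ell \leq \mathrm{rpn}(R)$ log-product expressions $B_1, \dots, B_{\ell}$ such that $R \equiv B_1 + \dots + B_{\ell}$.
   Context: Regular expressions (without star, without $\emptyset$) are built from $\epsilon$ and letters by union and concatenation; $\mathrm{rpn}(R)$ is the number of nodes of the syntax tree of $R$; $R\equiv R'$ means they describe the same language. A homogeneous expression describes a language all of whose words have the same length, its degree $\deg R$. A homogeneous expression $B$ is log-product if it is a letter, or there are homogeneous expressions $B_1,B_2$ with $B_1$ log-product, $\deg B_1\ge\deg B_2$ and $B=B_1B_2$ or $B=B_2B_1$. *)

theory Defs
  imports Main
begin

datatype 'a rexp = Eps | Lit 'a | Plus "'a rexp" "'a rexp" | Times "'a rexp" "'a rexp"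

fun lang :: "'a rexp \<Rightarrow> 'a list set" where
  "lang Eps = {[]}"
| "lang (Lit a) = {[a]}"
| "lang (Plus r s) = lang r \<union> lang s"
| "lang (Times r s) = {u @ v | u v. u \<in> lang r \<and> v \<in> lang s}"

fun rpn :: "'a rexp \<Rightarrow> nat" where
  "rpn Eps = 1"
| "rpn (Lit a) = 1"
| "rpn (Plus r s) = 1 + rpn r + rpn s"
| "rpn (Times r s) = 1 + rpn r + rpn s"

definition equiv_rexp :: "'a rexp \<Rightarrow> 'a rexp \<Rightarrow> bool" (infix "\<equiv>\<^sub>r" 50) where
  "r \<equiv>\<^sub>r s \<longleftrightarrow> lang r = lang s"

definition homogeneous :: "'a rexp \<Rightarrow> bool" where
  "homogeneous r \<longleftrightarrow> (\<exists>n. \<forall>w \<in> lang r. length w = n)"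

definition deg :: "'a rexp \<Rightarrow> nat" where
  "deg r = (THE n. \<forall>w \<in> lang r. length w = n)"

inductive log_product :: "'a rexp \<Rightarrow> bool" where
  lit: "log_product (Lit a)"
| left: "\<lbrakk>log_product B1; homogeneous B2; deg B1 \<ge> deg B2\<rbrakk> \<Longrightarrow> log_product (Times B1 B2)"
| right: "\<lbrakk>log_product B1; homogeneous B2; deg B1 \<ge> deg B2\<rbrakk> \<Longrightarrow> log_product (Times B2 B1)"

fun sum_rexp :: "'a rexp list \<Rightarrow> 'a rexp" where
  "sum_rexp [] = Eps"
| "sum_rexp [B] = B"
| "sum_rexp (B # Bs) = Plus B (sum_rexp Bs)"

end

theory Submission
  imports Defs
begin

lemma lang_ne: "lang r \<noteq> {}"
  by (induction r) auto

lemma lang_sum: "Bs \<noteq> [] \<Longrightarrow> lang (sum_rexp Bs) = \<Union>(lang ` set Bs)"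
  by (induction Bs rule: sum_rexp.induct) auto

lemma deg_eq: "\<forall>w\<in>lang r. length w = n \<Longrightarrow> deg r = n"
  unfolding deg_def
proof (rule the_equality)
  fix m assume a: "\<forall>w\<in>lang r. length w = n" and b: "\<forall>w\<in>lang r. length w = m"
  obtain w where "w \<in> lang r" using lang_ne by blast
  then show "m = n" using a b by auto
qed

lemma lang_eps: "\<forall>w\<in>lang r. length w = 0 \<Longrightarrow> lang r = {[]}"
  using lang_ne[of r] by auto

lemma main:
  "\<forall>w\<in>lang R. length w = n \<Longrightarrow> n \<ge> 1 \<Longrightarrow>
   \<exists>Bs. Bs \<noteq> [] \<and> length Bs \<le> rpn R \<and> (\<forall>B \<in> set Bs. log_product B \<and> (\<forall>w\<in>lang B. length w = n))
     \<and> lang (sum_rexp Bs) = lang R"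
proof (induction R arbitrary: n)
  case Eps
  then show ?case by auto
next
  case (Lit x)
  then show ?case by (intro exI[of _ "[Lit x]"]) (auto intro: log_product.lit)
next
  case (Plus r s)
  from Plus.prems have hr: "\<forall>w\<in>lang r. length w = n" and hs: "\<forall>w\<in>lang s. length w = n" by auto
  obtain Bs1 where b1: "Bs1 \<noteq> [] \<and> length Bs1 \<le> rpn r \<and> (\<forall>B \<in> set Bs1. log_product B \<and> (\<forall>w\<in>lang B. length w = n))
     \<and> lang (sum_rexp Bs1) = lang r" using Plus.IH(1)[OF hr Plus.prems(2)] by blast
  obtain Bs2 where b2: "Bs2 \<noteq> [] \<and> length Bs2 \<le> rpn s \<and> (\<forall>B \<in> set Bs2. log_product B \<and> (\<forall>w\<in>lang B. length w = n))
     \<and> lang (sum_rexp Bs2) = lang s" using Plus.IH(2)[OF hs Plus.prems(2)] by blast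
  show ?case
    apply (intro exI[of _ "Bs1 @ Bs2"])
    using b1 b2 lang_sum[of Bs1] lang_sum[of Bs2] lang_sum[of "Bs1 @ Bs2"] by (simp add: image_Un) blast
next
  case (Times r s)
  obtain u0 where u0: "u0 \<in> lang r" using lang_ne by blast
  obtain v0 where v0: "v0 \<in> lang s" using lang_ne by blast
  define a where "a = length u0"
  define b where "b = length v0"
  have hr: "\<forall>w\<in>lang r. length w = a"
  proof
    fix w assume "w \<in> lang r"
    then have "w @ v0 \<in> lang (Times r s)" "u0 @ v0 \<in> lang (Times r s)" using u0 v0 by auto
    then have "length (w @ v0) = n" "length (u0 @ v0) = n" using Times.prems(1) by blast+
    then show "length w = a" by (simp add: a_def)
  qed
  have hs: "\<forall>w\<in>lang s. length w = b"
  proof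
    fix w assume "w \<in> lang s"
    then have "u0 @ w \<in> lang (Times r s)" "u0 @ v0 \<in> lang (Times r s)" using u0 v0 by auto
    then have "length (u0 @ w) = n" "length (u0 @ v0) = n" using Times.prems(1) by blast+
    then show "length w = b" by (simp add: b_def)
  qed
  have abn: "a + b = n"
  proof -
    have "u0 @ v0 \<in> lang (Times r s)" using u0 v0 by auto
    then have "length (u0 @ v0) = n" using Times.prems(1) by blast
    then show ?thesis by (simp add: a_def b_def)
  qed
  have dr: "deg r = a" using deg_eq[OF hr] .
  have ds: "deg s = b" using deg_eq[OF hs] .
  show ?case
  proof (cases "b = 0")
    case True
    then have ls: "lang s = {[]}" using lang_eps hs by blast
    have "lang (Times r s) = lang r" using ls by auto
    moreover have "\<forall>w\<in>lang r. length w = n" using hr abn True by simp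
    ultimately show ?thesis using Times.IH(1)[of n] Times.prems(2) by fastforce
  next
    case bnz: False
    show ?thesis
    proof (cases "a = 0")
      case True
      then have lr: "lang r = {[]}" using lang_eps hr by blast
      have "lang (Times r s) = lang s" using lr by auto
      moreover have "\<forall>w\<in>lang s. length w = n" using hs abn True by simp
      ultimately show ?thesis using Times.IH(2)[of n] Times.prems(2) by fastforce
    next
      case anz: False
      show ?thesis
      proof (cases "b \<le> a")
        case True
        obtain Bs where bs: "Bs \<noteq> [] \<and> length Bs \<le> rpn r \<and> (\<forall>B \<in> set Bs. log_product B \<and> (\<forall>w\<in>lang B. length w = a))
          \<and> lang (sum_rexp Bs) = lang r" using Times.IH(1)[OF hr] anz by fastforce
        have homs: "homogeneous s" unfolding homogeneous_def using hs by blast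
        show ?thesis
        proof (intro exI[of _ "map (\<lambda>B. Times B s) Bs"] conjI ballI)
          show "map (\<lambda>B. Times B s) Bs \<noteq> []" using bs by simp
          show "length (map (\<lambda>B. Times B s) Bs) \<le> rpn (Times r s)" using bs by simp
        next
          fix C assume "C \<in> set (map (\<lambda>B. Times B s) Bs)"
          then obtain B where B: "B \<in> set Bs" "C = Times B s" by auto
          have "deg B = a" using deg_eq bs B by blast
          then show "log_product C" using B bs homs ds True by (auto intro: log_product.left)
        next
          fix C w assume "C \<in> set (map (\<lambda>B. Times B s) Bs)" "w \<in> lang C"
          then obtain B where B: "B \<in> set Bs" "C = Times B s" "w \<in> lang C" by auto
          show "length w = n" using B bs hs abn by auto
        next
          have "lang (sum_rexp (map (\<lambda>B. Times B s) Bs)) = \<Union>(lang ` (\<lambda>B. Times B s) ` set Bs)"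
            using lang_sum[of "map (\<lambda>B. Times B s) Bs"] bs by simp
          also have "\<dots> = lang (Times r s)"
            using bs lang_sum[of Bs] by auto
          finally show "lang (sum_rexp (map (\<lambda>B. Times B s) Bs)) = lang (Times r s)" .
        qed
      next
        case False
        obtain Bs where bs: "Bs \<noteq> [] \<and> length Bs \<le> rpn s \<and> (\<forall>B \<in> set Bs. log_product B \<and> (\<forall>w\<in>lang B. length w = b))
          \<and> lang (sum_rexp Bs) = lang s" using Times.IH(2)[OF hs] bnz by fastforce
        have homr: "homogeneous r" unfolding homogeneous_def using hr by blast
        show ?thesis
        proof (intro exI[of _ "map (\<lambda>B. Times r B) Bs"] conjI ballI)
          show "map (\<lambda>B. Times r B) Bs \<noteq> []" using bs by simp
          show "length (map (\<lambda>B. Times r B) Bs) \<le> rpn (Times r s)" using bs by simp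
        next
          fix C assume "C \<in> set (map (\<lambda>B. Times r B) Bs)"
          then obtain B where B: "B \<in> set Bs" "C = Times r B" by auto
          have "deg B = b" using deg_eq bs B by blast
          then show "log_product C" using B bs homr dr False by (auto intro: log_product.right)
        next
          fix C w assume "C \<in> set (map (\<lambda>B. Times r B) Bs)" "w \<in> lang C"
          then obtain B where B: "B \<in> set Bs" "C = Times r B" "w \<in> lang C" by auto
          show "length w = n" using B bs hr abn by auto
        next
          have "lang (sum_rexp (map (\<lambda>B. Times r B) Bs)) = \<Union>(lang ` (\<lambda>B. Times r B) ` set Bs)"
            using lang_sum[of "map (\<lambda>B. Times r B) Bs"] bs by simp
          also have "\<dots> = lang (Times r s)"
            using bs lang_sum[of Bs] by auto
          finally show "lang (sum_rexp (map (\<lambda>B. Times r B) Bs)) = lang (Times r s)" .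
        qed
      qed
    qed
  qed
qed

theorem lemma6p2:
  fixes R :: "'a rexp"
  assumes "homogeneous R"
    and "\<not> (R \<equiv>\<^sub>r Eps)"
  shows "\<exists>Bs. Bs \<noteq> [] \<and> length Bs \<le> rpn R \<and> (\<forall>B \<in> set Bs. log_product B)
              \<and> R \<equiv>\<^sub>r sum_rexp Bs"
proof -
  obtain n where n: "\<forall>w\<in>lang R. length w = n" using assms(1) unfolding homogeneous_def by blast
  have "n \<noteq> 0"
  proof
    assume "n = 0"
    then have "lang R = {[]}" using lang_eps n by blast
    then show False using assms(2) unfolding equiv_rexp_def by simp
  qed
  then obtain Bs where "Bs \<noteq> [] \<and> length Bs \<le> rpn R \<and> (\<forall>B \<in> set Bs. log_product B \<and> (\<forall>w\<in>lang B. length w = n))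
     \<and> lang (sum_rexp Bs) = lang R" using main[OF n] by fastforce
  then show ?thesis unfolding equiv_rexp_def by metis
qed

end
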